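(* Let $(S,K,I)$ be a split graph with $|I|\ge2$ and $K=\bigcup_{v\in I}N_S(v)$. If $\Phi(S)$ is simple and connected, then $S$ is homogeneous.
   Context: All graphs are finite and simple. A split graph is a graph $S$ whose vertex set is a disjoint union $V(S)=K\,\dot\cup\,I$ with $K$ a clique and $I$ an independent set; $(K,I)$ is called a bipartition of $S$, and $(S,K,I)$ denotes $S$ together with this fixed bipartition. For a split graph $(S,K,I)$ and distinct $u,v\in I$, $\sigma_{uv}(S)$ is the number of induced subgraphs of $S$ isomorphic to $P_4$ containing both $u$ and $v$. The factor graph $\Phi(S)$ is the loopless multigraph with vertex set $I$ having exactly $\sigma_{uv}(S)$ parallel edges between $u$ and $v$; it is simple if $\sigma_{uv}(S)\in\{0,1\}$ for all $u,v$. Graph notions (connected, complete, clique, etc.) applied to $\Phi(S)$ refer to its underlying simple graph, in which $u\sim v$ iff $\sigma_{uv}(S)\ge1$. A vertex $w$ of $(S,K,I)$ is swing if $N_S(w)=K\setminus\{w\}$. $(S,K,I)$ is balanced if $|K|=\omega(S)$ and $|I|=\alpha(S)$; it is known that $S$ is balanced iff it has no swing vertex. $(S,K,I)$ is homogeneous if it is balanced and all vertices of $I$ have the same degree in $S$. *)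

theory Defs
  imports Main
begin

definition simple_graph :: "'a set \<Rightarrow> ('a \<Rightarrow> 'a \<Rightarrow> bool) \<Rightarrow> bool" where
  "simple_graph V E \<longleftrightarrow> finite V \<and> (\<forall>x y. E x y \<longrightarrow> E y x) \<and> (\<forall>x. \<not> E x x)
      \<and> (\<forall>x y. E x y \<longrightarrow> x \<in> V \<and> y \<in> V)"

definition nbhd :: "'a set \<Rightarrow> ('a \<Rightarrow> 'a \<Rightarrow> bool) \<Rightarrow> 'a \<Rightarrow> 'a set" where
  "nbhd V E v = {w \<in> V. E v w}"

definition degree :: "'a set \<Rightarrow> ('a \<Rightarrow> 'a \<Rightarrow> bool) \<Rightarrow> 'a \<Rightarrow> nat" where
  "degree V E v = card (nbhd V E v)"

definition is_clique :: "('a \<Rightarrow> 'a \<Rightarrow> bool) \<Rightarrow> 'a set \<Rightarrow> bool" where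
  "is_clique E C \<longleftrightarrow> (\<forall>x\<in>C. \<forall>y\<in>C. x \<noteq> y \<longrightarrow> E x y)"

definition is_indep :: "('a \<Rightarrow> 'a \<Rightarrow> bool) \<Rightarrow> 'a set \<Rightarrow> bool" where
  "is_indep E A \<longleftrightarrow> (\<forall>x\<in>A. \<forall>y\<in>A. \<not> E x y)"

definition clique_number :: "'a set \<Rightarrow> ('a \<Rightarrow> 'a \<Rightarrow> bool) \<Rightarrow> nat" where
  "clique_number V E = Max {card C | C. C \<subseteq> V \<and> is_clique E C}"

definition indep_number :: "'a set \<Rightarrow> ('a \<Rightarrow> 'a \<Rightarrow> bool) \<Rightarrow> nat" where
  "indep_number V E = Max {card A | A. A \<subseteq> V \<and> is_indep E A}"

definition split_graph :: "'a set \<Rightarrow> ('a \<Rightarrow> 'a \<Rightarrow> bool) \<Rightarrow> 'a set \<Rightarrow> 'a set \<Rightarrow> bool" where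
  "split_graph V E K I \<longleftrightarrow> simple_graph V E \<and> V = K \<union> I \<and> K \<inter> I = {}
      \<and> is_clique E K \<and> is_indep E I"

definition induces_P4 :: "('a \<Rightarrow> 'a \<Rightarrow> bool) \<Rightarrow> 'a set \<Rightarrow> bool" where
  "induces_P4 E X \<longleftrightarrow> (\<exists>f. bij_betw f {0::nat..<4} X \<and>
      (\<forall>i<4. \<forall>j<4. E (f i) (f j) \<longleftrightarrow> (i = j + 1 \<or> j = i + 1)))"

definition sigma :: "'a set \<Rightarrow> ('a \<Rightarrow> 'a \<Rightarrow> bool) \<Rightarrow> 'a \<Rightarrow> 'a \<Rightarrow> nat" where
  "sigma V E u v = card {X. X \<subseteq> V \<and> u \<in> X \<and> v \<in> X \<and> induces_P4 E X}"

text \<open>Underlying simple graph of the factor graph Phi(S), on vertex set I.\<close>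
definition factor_adj :: "'a set \<Rightarrow> ('a \<Rightarrow> 'a \<Rightarrow> bool) \<Rightarrow> 'a set \<Rightarrow> 'a \<Rightarrow> 'a \<Rightarrow> bool" where
  "factor_adj V E I u v \<longleftrightarrow> u \<in> I \<and> v \<in> I \<and> u \<noteq> v \<and> sigma V E u v \<ge> 1"

definition factor_simple :: "'a set \<Rightarrow> ('a \<Rightarrow> 'a \<Rightarrow> bool) \<Rightarrow> 'a set \<Rightarrow> bool" where
  "factor_simple V E I \<longleftrightarrow> (\<forall>u\<in>I. \<forall>v\<in>I. u \<noteq> v \<longrightarrow> sigma V E u v \<le> 1)"

definition factor_connected :: "'a set \<Rightarrow> ('a \<Rightarrow> 'a \<Rightarrow> bool) \<Rightarrow> 'a set \<Rightarrow> bool" where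
  "factor_connected V E I \<longleftrightarrow> I \<noteq> {} \<and>
      (\<forall>u\<in>I. \<forall>v\<in>I. (u, v) \<in> {(x, y). factor_adj V E I x y}\<^sup>*)"

definition balanced :: "'a set \<Rightarrow> ('a \<Rightarrow> 'a \<Rightarrow> bool) \<Rightarrow> 'a set \<Rightarrow> 'a set \<Rightarrow> bool" where
  "balanced V E K I \<longleftrightarrow> card K = clique_number V E \<and> card I = indep_number V E"

definition homogeneous :: "'a set \<Rightarrow> ('a \<Rightarrow> 'a \<Rightarrow> bool) \<Rightarrow> 'a set \<Rightarrow> 'a set \<Rightarrow> bool" where
  "homogeneous V E K I \<longleftrightarrow> balanced V E K I \<and>
      (\<forall>u\<in>I. \<forall>v\<in>I. degree V E u = degree V E v)"

end

theory Submission
  imports Defs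
begin

lemma all_less_4: "(\<forall>i<(4::nat). P i) \<longleftrightarrow> (P 0 \<and> P 1 \<and> P 2 \<and> P 3)"
  by (auto simp: less_Suc_eq numeral_eq_Suc)

lemma split_facts:
  assumes "split_graph V E K I"
  shows "finite V" "\<And>x y. E x y \<Longrightarrow> E y x" "\<And>x. \<not> E x x"
    "\<And>x y. E x y \<Longrightarrow> x \<in> V \<and> y \<in> V" "V = K \<union> I" "K \<inter> I = {}"
    "\<And>x y. x \<in> K \<Longrightarrow> y \<in> K \<Longrightarrow> x \<noteq> y \<Longrightarrow> E x y"
    "\<And>x y. x \<in> I \<Longrightarrow> y \<in> I \<Longrightarrow> \<not> E x y"
  using assms unfolding split_graph_def simple_graph_def is_clique_def is_indep_def
  by blast+

lemma P4_ends:
  assumes sg: "split_graph V E K I" and P: "induces_P4 E X" and XV: "X \<subseteq> V"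
    and "u \<in> X" "v \<in> X" "u \<in> I" "v \<in> I" "u \<noteq> v"
  shows "\<exists>b c. b \<in> K \<and> c \<in> K \<and> E u b \<and> \<not> E v b \<and> E v c \<and> \<not> E u c"
proof -
  note F = split_facts[OF sg]
  obtain f where bij: "bij_betw f {0::nat..<4} X"
    and adj: "\<forall>i<4. \<forall>j<4. E (f i) (f j) \<longleftrightarrow> (i = j + 1 \<or> j = i + 1)"
    using P unfolding induces_P4_def by blast
  have fV: "f i \<in> V" if "i < 4" for i
    using bij_betw_apply[OF bij] that XV by auto
  have inj: "f i \<noteq> f j" if "i < 4" "j < 4" "i \<noteq> j" for i j
    using bij that unfolding bij_betw_def inj_on_def by auto
  have a01: "E (f 0) (f 1)" "E (f 1) (f 2)" "E (f 2) (f 3)"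
    "\<not> E (f 0) (f 2)" "\<not> E (f 1) (f 3)" "\<not> E (f 0) (f 3)"
    using adj by auto
  have inK: "x \<in> K" if "x \<in> V" "E x y" "y \<in> I" for x y
    using that F by blast
  have f1K: "f 1 \<in> K"
  proof (rule ccontr)
    assume "f 1 \<notin> K"
    then have "f 1 \<in> I" using fV[of 1] F by auto
    then have "f 0 \<in> K" "f 2 \<in> K" using inK[OF fV[of 0] a01(1)] inK[OF fV[of 2] F(2)[OF a01(2)]] by auto
    then show False using F(7)[of "f 0" "f 2"] inj[of 0 2] a01 by auto
  qed
  have f2K: "f 2 \<in> K"
  proof (rule ccontr)
    assume "f 2 \<notin> K"
    then have "f 2 \<in> I" using fV[of 2] F by auto
    then have "f 1 \<in> K" "f 3 \<in> K" using inK[OF fV[of 1] a01(2)] inK[OF fV[of 3] F(2)[OF a01(3)]] by auto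
    then show False using F(7)[of "f 1" "f 3"] inj[of 1 3] a01 by auto
  qed
  have img: "f ` {0..<4} = X" using bij unfolding bij_betw_def by auto
  obtain i where i: "i < 4" "u = f i" using img \<open>u \<in> X\<close> by force
  obtain j where j: "j < 4" "v = f j" using img \<open>v \<in> X\<close> by force
  have "i \<noteq> 1" "i \<noteq> 2" "j \<noteq> 1" "j \<noteq> 2"
    using i j f1K f2K \<open>u \<in> I\<close> \<open>v \<in> I\<close> F(6) by auto
  moreover have "i \<noteq> j" using i j \<open>u \<noteq> v\<close> by auto
  ultimately have "(i = 0 \<and> j = 3) \<or> (i = 3 \<and> j = 0)" using i j by auto
  then show ?thesis
  proof
    assume "i = 0 \<and> j = 3"
    then show ?thesis using i j f1K f2K a01 F(2) by metis
  next
    assume "i = 3 \<and> j = 0"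
    then show ?thesis using i j f1K f2K a01 F(2) by metis
  qed
qed

lemma P4_make:
  assumes sg: "split_graph V E K I" and "u \<in> I" "v \<in> I" "b \<in> K" "c \<in> K"
    "E u b" "\<not> E v b" "E v c" "\<not> E u c"
  shows "induces_P4 E {u, b, c, v}"
proof -
  note F = split_facts[OF sg]
  define f where "f i = (if i = 0 then u else if i = (1::nat) then b else if i = 2 then c else v)" for i
  have d: "u \<noteq> b" "u \<noteq> c" "v \<noteq> b" "v \<noteq> c" "b \<noteq> c" "u \<noteq> v"
    using assms F by auto
  have e: "{0::nat..<4} = {0,1,2,3}" by auto
  have "bij_betw f {0::nat..<4} {u, b, c, v}"
    unfolding bij_betw_def inj_on_def e using d by (auto simp: f_def)
  moreover have "\<forall>i<4. \<forall>j<4. E (f i) (f j) \<longleftrightarrow> (i = j + 1 \<or> j = i + 1)"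
    unfolding all_less_4 f_def using assms F(2,3,7,8) d by auto
  ultimately show ?thesis unfolding induces_P4_def by blast
qed

lemma nbhd_sub:
  assumes sg: "split_graph V E K I" and "u \<in> I"
  shows "nbhd V E u \<subseteq> K"
  using split_facts[OF sg] assms unfolding nbhd_def by blast

lemma adj_facts:
  assumes sg: "split_graph V E K I" and fs: "factor_simple V E I" and fa: "factor_adj V E I u v"
  shows "degree V E u = degree V E v \<and> (\<exists>c\<in>K. \<not> E u c)"
proof -
  note F = split_facts[OF sg]
  have uI: "u \<in> I" and vI: "v \<in> I" and uv: "u \<noteq> v" and s1: "sigma V E u v \<ge> 1"
    using fa unfolding factor_adj_def by auto
  have s2: "sigma V E u v \<le> 1" using fs uI vI uv unfolding factor_simple_def by auto
  define S where "S = {X. X \<subseteq> V \<and> u \<in> X \<and> v \<in> X \<and> induces_P4 E X}"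
  have finS: "finite S" 
  proof -
    have "S \<subseteq> Pow V" unfolding S_def by auto
    then show ?thesis using F(1) by (meson finite_Pow_iff finite_subset)
  qed
  have cS: "card S = 1" using s1 s2 unfolding sigma_def S_def by auto
  have S_ne: "S \<noteq> {}" using cS by auto
  then obtain X where "X \<subseteq> V" "u \<in> X" "v \<in> X" "induces_P4 E X" unfolding S_def by auto
  then obtain b c where bc: "b \<in> K" "c \<in> K" "E u b" "\<not> E v b" "E v c" "\<not> E u c"
    using P4_ends[OF sg _ _ _ _ uI vI uv] by metis
  have KV: "K \<subseteq> V" using F(5) by auto
  have inS: "{u, b, c, v} \<in> S" if "b \<in> K" "c \<in> K" "E u b" "\<not> E v b" "E v c" "\<not> E u c" for b c
    unfolding S_def using P4_make[OF sg uI vI that] that uI vI KV F(5) by auto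
  have two: False if "Y \<in> S" "Z \<in> S" "Y \<noteq> Z" for Y Z
  proof -
    have "{Y, Z} \<subseteq> S" using that by auto
    then have "card {Y, Z} \<le> card S" using finS card_mono by blast
    then show False using that cS by auto
  qed
  have D1: "nbhd V E u - nbhd V E v = {b}"
  proof
    show "{b} \<subseteq> nbhd V E u - nbhd V E v" using bc KV unfolding nbhd_def by auto
    show "nbhd V E u - nbhd V E v \<subseteq> {b}"
    proof
      fix b' assume b': "b' \<in> nbhd V E u - nbhd V E v"
      then have b'K: "b' \<in> K" using nbhd_sub[OF sg uI] by auto
      have "E u b'" "\<not> E v b'" using b' F(4) unfolding nbhd_def by auto
      show "b' \<in> {b}"
      proof (rule ccontr)
        assume "b' \<notin> {b}"
        moreover have "b' \<noteq> u" "b' \<noteq> v" "b' \<noteq> c" using b'K uI vI F(6) bc(5) \<open>\<not> E v b'\<close> by blast+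
        ultimately have "{u, b, c, v} \<noteq> {u, b', c, v}" by blast
        then show False using two[OF inS[OF bc] inS[OF b'K bc(2) \<open>E u b'\<close> \<open>\<not> E v b'\<close> bc(5,6)]] by blast
      qed
    qed
  qed
  have D2: "nbhd V E v - nbhd V E u = {c}"
  proof
    show "{c} \<subseteq> nbhd V E v - nbhd V E u" using bc KV unfolding nbhd_def by auto
    show "nbhd V E v - nbhd V E u \<subseteq> {c}"
    proof
      fix c' assume c': "c' \<in> nbhd V E v - nbhd V E u"
      then have c'K: "c' \<in> K" using nbhd_sub[OF sg vI] by auto
      have "E v c'" "\<not> E u c'" using c' F(4) unfolding nbhd_def by auto
      show "c' \<in> {c}"
      proof (rule ccontr)
        assume "c' \<notin> {c}"
        moreover have "c' \<noteq> u" "c' \<noteq> v" "c' \<noteq> b" using c'K uI vI F(6) bc(3) \<open>\<not> E u c'\<close> by blast+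
        ultimately have "{u, b, c, v} \<noteq> {u, b, c', v}" by blast
        then show False using two[OF inS[OF bc] inS[OF bc(1) c'K bc(3,4) \<open>E v c'\<close> \<open>\<not> E u c'\<close>]] by blast
      qed
    qed
  qed
  have fin: "finite (nbhd V E u)" "finite (nbhd V E v)" using F(1) unfolding nbhd_def by auto
  have "card (nbhd V E u) = card (nbhd V E u - nbhd V E v) + card (nbhd V E u \<inter> nbhd V E v)"
    using fin card_Int_Diff by (metis add.commute)
  moreover have "card (nbhd V E v) = card (nbhd V E v - nbhd V E u) + card (nbhd V E v \<inter> nbhd V E u)"
    using fin card_Int_Diff by (metis add.commute)
  ultimately have "degree V E u = degree V E v" unfolding degree_def using D1 D2 by (simp add: Int_commute)
  then show ?thesis using bc by blast
qed

theorem theorem3p3: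
  fixes V :: "'a set" and E :: "'a \<Rightarrow> 'a \<Rightarrow> bool" and K I :: "'a set"
  assumes "split_graph V E K I"
    and "card I \<ge> 2"
    and "K = (\<Union>v\<in>I. nbhd V E v)"
    and "factor_simple V E I"
    and "factor_connected V E I"
  shows "homogeneous V E K I"
proof -
  note sg = assms(1)
  note F = split_facts[OF sg]
  let ?R = "{(x, y). factor_adj V E I x y}"
  have conn: "\<forall>u\<in>I. \<forall>v\<in>I. (u, v) \<in> ?R\<^sup>*" using assms(5) unfolding factor_connected_def by blast
  have finI: "finite I" and finK: "finite K" using F(1) F(5) by auto
  have deg_path: "(u, v) \<in> ?R\<^sup>* \<Longrightarrow> degree V E u = degree V E v" for u v
  proof (induction rule: rtrancl_induct)
    case base then show ?case by simp
  next
    case (step y z)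
    then show ?case using adj_facts[OF sg assms(4), of y z] by auto
  qed
  have deg: "\<forall>u\<in>I. \<forall>v\<in>I. degree V E u = degree V E v" using conn deg_path by blast
  have noK: "\<exists>c\<in>K. \<not> E w c" if wI: "w \<in> I" for w
  proof -
    have "I - {w} \<noteq> {}"
    proof
      assume "I - {w} = {}"
      then have "I \<subseteq> {w}" by auto
      then have "card I \<le> 1" using card_mono[of "{w}" I] by auto
      then show False using assms(2) by auto
    qed
    then obtain v where v: "v \<in> I" "v \<noteq> w" by auto
    have "(w, v) \<in> ?R\<^sup>*" using conn wI v by blast
    then obtain z where "(w, z) \<in> ?R"
    proof (cases rule: converse_rtranclE)
      case base then show ?thesis using v(2) by simp
    next
      case (step z) then show ?thesis using that by blast
    qed
    then show ?thesis using adj_facts[OF sg assms(4), of w z] by auto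
  qed
  have KV: "K \<subseteq> V" "I \<subseteq> V" using F(5) by auto
  have cl: "clique_number V E = card K"
    unfolding clique_number_def
  proof (rule Max_eqI)
    have "{card C |C. C \<subseteq> V \<and> is_clique E C} \<subseteq> card ` Pow V" by auto
    then show "finite {card C |C. C \<subseteq> V \<and> is_clique E C}"
      using F(1) by (meson finite_Pow_iff finite_imageI finite_subset)
    show "card K \<in> {card C |C. C \<subseteq> V \<and> is_clique E C}"
      using KV sg unfolding split_graph_def by auto
    fix y assume "y \<in> {card C |C. C \<subseteq> V \<and> is_clique E C}"
    then obtain C where C: "y = card C" "C \<subseteq> V" "is_clique E C" by auto
    show "y \<le> card K"
    proof (cases "C \<inter> I = {}")
      case True
      then have "C \<subseteq> K" using C F(5) by auto
      then show ?thesis using C finK card_mono by blast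
    next
      case False
      then obtain w where w: "w \<in> C" "w \<in> I" by auto
      have "C - {w} \<subseteq> nbhd V E w"
        using C w unfolding is_clique_def nbhd_def by auto
      moreover have "nbhd V E w \<subset> K" using nbhd_sub[OF sg w(2)] noK[OF w(2)]
        unfolding nbhd_def by auto
      ultimately have "card (C - {w}) < card K" using finK
        by (meson card_mono psubset_card_mono finite_subset order.strict_trans1 psubset_imp_subset)
      moreover have "finite C" using C F(1) finite_subset by blast
      ultimately show ?thesis using C w by (simp add: card_Diff_singleton)
    qed
  qed
  have ind: "indep_number V E = card I"
    unfolding indep_number_def
  proof (rule Max_eqI)
    have "{card C |C. C \<subseteq> V \<and> is_indep E C} \<subseteq> card ` Pow V" by auto
    then show "finite {card C |C. C \<subseteq> V \<and> is_indep E C}"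
      using F(1) by (meson finite_Pow_iff finite_imageI finite_subset)
    show "card I \<in> {card C |C. C \<subseteq> V \<and> is_indep E C}"
      using KV sg unfolding split_graph_def by auto
    fix y assume "y \<in> {card C |C. C \<subseteq> V \<and> is_indep E C}"
    then obtain C where C: "y = card C" "C \<subseteq> V" "is_indep E C" by auto
    show "y \<le> card I"
    proof (cases "C \<inter> K = {}")
      case True
      then have "C \<subseteq> I" using C F(5) by auto
      then show ?thesis using C finI card_mono by blast
    next
      case False
      then obtain k where k: "k \<in> C" "k \<in> K" by auto
      then obtain v where v: "v \<in> I" "k \<in> nbhd V E v" using assms(3) by auto
      have Evk: "E v k" using v unfolding nbhd_def by auto
      have "C - {k} \<subseteq> I - {v}"
      proof
        fix x assume x: "x \<in> C - {k}"
        have "x \<notin> K" using x k C F(7) unfolding is_indep_def by blast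
        moreover have "x \<noteq> v" using x k C Evk unfolding is_indep_def by blast
        ultimately show "x \<in> I - {v}" using x C F(5) by auto
      qed
      then have "card (C - {k}) \<le> card I - 1"
        using finI v by (metis card_Diff_singleton card_mono finite_Diff)
      moreover have "finite C" using C F(1) finite_subset by blast
      moreover have "card I \<ge> 1" using assms(2) by auto
      ultimately show ?thesis using C k by (simp add: card_Diff_singleton)
    qed
  qed
  have "balanced V E K I" unfolding balanced_def using cl ind by simp
  then show ?thesis unfolding homogeneous_def using deg by blast
qed


end
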